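(* Let $d\ge2$, let $(c_t)_{t=0}^\infty\subset\mathbb{S}^{d-1}$ be a sequence of unit vectors and let $\omega:\mathsf{P}^d_+\to\mathbb{R}_{\ge0}$ be a function such that $\omega(X)\le C\sqrt{\lambda_{\max}(X)}$ for all $X\in\mathsf{P}^d_+$, for some constant $C>0$. Let $\lambda_0\ge\max\Big\{2,\ \sqrt{\tfrac{2}{3(d-1)}}\,2dC+\tfrac{2}{3(d-1)}\Big\}$ and define matrices $V_t\in\mathbb{R}^{d\times d}$ by $$V_0=\lambda_0\mathbb{I}_{d\times d},\qquad V_{t+1}=V_t+\omega(V_t)\sum_{i=1}^{d-1}P_{t,i},$$ where $P_{t,i}=a^+_{t+1,i}(a^+_{t+1,i})^{\mathsf T}+a^-_{t+1,i}(a^-_{t+1,i})^{\mathsf T}$, $a^\pm_{t+1,i}=\tilde a^\pm_{t+1,i}/\|\tilde a^\pm_{t+1,i}\|_2$, $\tilde a^\pm_{t+1,i}=c_t\pm\frac{1}{\sqrt{\lambda_{t,1}}}v_{t,i}$, and $\lambda_{t,1}\le\lambda_{t,2}\le\dots\le\lambda_{t,d}$ are the eigenvalues of $V_t$ with corresponding orthonormal eigenvectors $v_{t,1},\dots,v_{t,d}$. Then $$\lambda_{\min}(V_t)\ge\sqrt{\frac{2}{3(d-1)}\lambda_{\max}(V_t)}\qquad\text{for all }t\ge0.$$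
   Context: $\mathsf{P}^d_+$ is the set of real positive semidefinite $d\times d$ matrices; $\lambda_{\min}$, $\lambda_{\max}$ denote minimal and maximal eigenvalue; $\mathbb{S}^{d-1}$ is the unit sphere of $\mathbb{R}^d$. *)

theory Defs
  imports "HOL-Analysis.Analysis"
begin

definition psd :: "real^'n^'n \<Rightarrow> bool" where
  "psd X \<longleftrightarrow> transpose X = X \<and> (\<forall>x. 0 \<le> x \<bullet> (X *v x))"

definition eigvals :: "real^'n^'n \<Rightarrow> real set" where
  "eigvals X = {\<mu>. \<exists>v. v \<noteq> 0 \<and> X *v v = \<mu> *\<^sub>R v}"

definition lambda_max :: "real^'n^'n \<Rightarrow> real" where
  "lambda_max X = Max (eigvals X)"

definition lambda_min :: "real^'n^'n \<Rightarrow> real" where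
  "lambda_min X = Min (eigvals X)"

definition outer :: "real^'n \<Rightarrow> real^'n^'n" where
  "outer a = (\<chi> i j. a $ i * a $ j)"

definition normalize_vec :: "real^'n \<Rightarrow> real^'n" where
  "normalize_vec x = (1 / norm x) *\<^sub>R x"

text \<open>P_{t,i} built from c_t, the smallest eigenvalue lambda_{t,1} and eigenvector v_{t,i}.\<close>
definition Pmat :: "real^'n \<Rightarrow> real \<Rightarrow> real^'n \<Rightarrow> real^'n^'n" where
  "Pmat c l1 w =
     outer (normalize_vec (c + (1 / sqrt l1) *\<^sub>R w)) +
     outer (normalize_vec (c - (1 / sqrt l1) *\<^sub>R w))"

end

theory Submission
  imports Defs
begin

lemma sum_mvec: "(\<Sum>i\<in>S. A i) *v x = (\<Sum>i\<in>S. A i *v x)"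
  for A :: "'a \<Rightarrow> real^'n^'m"
  by (induct S rule: infinite_finite_induct) (auto simp: matrix_vector_mult_add_rdistrib)

lemma mvec_scale: "A *v (r *\<^sub>R y) = r *\<^sub>R (A *v y)"
  for A :: "real^'n^'m"
  by (simp add: vec_eq_iff matrix_vector_mult_def sum_distrib_left algebra_simps)

lemma transpose_add: "transpose (A + B) = transpose A + transpose B"
  by (simp add: vec_eq_iff transpose_def)

lemma transpose_sum: "transpose (\<Sum>i\<in>S. A i) = (\<Sum>i\<in>S. transpose (A i))"
  by (induct S rule: infinite_finite_induct) (auto simp: transpose_add transpose_def vec_eq_iff)

lemma outer_mvec: "outer a *v x = (a \<bullet> x) *\<^sub>R a"
  by (simp add: vec_eq_iff outer_def matrix_vector_mult_def inner_vec_def sum_distrib_left mult.commute mult.left_commute)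

lemma transpose_outer: "transpose (outer a) = outer a"
  by (simp add: vec_eq_iff transpose_def outer_def mult.commute)

lemma orth_expand:
  fixes v :: "nat \<Rightarrow> real^'n"
  assumes orth: "\<forall>i\<in>{1..CARD('n)}. \<forall>j\<in>{1..CARD('n)}. v i \<bullet> v j = (if i = j then 1 else 0)"
  shows "x = (\<Sum>i=1..CARD('n). (x \<bullet> v i) *\<^sub>R v i)"
proof -
  define d where "d = CARD('n)"
  define B where "B = v ` {1..d}"
  have inj: "inj_on v {1..d}"
  proof (rule inj_onI)
    fix i j assume "i \<in> {1..d}" "j \<in> {1..d}" "v i = v j"
    then show "i = j" using orth unfolding d_def by (metis zero_neq_one)
  qed
  have cardB: "card B = d" using inj by (simp add: B_def card_image)
  have po: "pairwise orthogonal B"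
    unfolding pairwise_def B_def orthogonal_def using orth d_def by auto
  have n0: "0 \<notin> B" unfolding B_def using orth d_def by force
  have ind: "independent B" using po n0 pairwise_orthogonal_independent by blast
  have "dim (UNIV :: (real^'n) set) \<le> card B" using cardB by (simp add: d_def)
  then have sp: "UNIV \<subseteq> span B" using card_ge_dim_independent[OF _ ind] by blast
  define y where "y = x - (\<Sum>i=1..d. (x \<bullet> v i) *\<^sub>R v i)"
  have yo: "y \<bullet> v j = 0" if "j \<in> {1..d}" for j
  proof -
    have "(\<Sum>i=1..d. (x \<bullet> v i) *\<^sub>R v i) \<bullet> v j = (\<Sum>i=1..d. (x \<bullet> v i) * (v i \<bullet> v j))"
      by (simp add: inner_sum_left)
    also have "\<dots> = (\<Sum>i=1..d. if i = j then x \<bullet> v j else 0)"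
      using orth that d_def by (intro sum.cong) auto
    also have "\<dots> = x \<bullet> v j" using that by simp
    finally show ?thesis by (simp add: y_def inner_diff_left)
  qed
  have "orthogonal y y"
    by (rule orthogonal_to_span[of y B]) (use sp yo in \<open>auto simp: B_def orthogonal_def\<close>)
  then have "y = 0" by (simp add: orthogonal_def)
  then show ?thesis by (simp add: y_def d_def)
qed

lemma nv_sq: "(x \<bullet> normalize_vec z)^2 = (x \<bullet> z)^2 / (norm z)^2"
  by (simp add: normalize_vec_def power_divide)

lemma nv_upper: "(x \<bullet> normalize_vec z)^2 \<le> (norm x)^2"
proof (cases "z = 0")
  case True then show ?thesis by (simp add: normalize_vec_def)
next
  case False
  have "\<bar>x \<bullet> z\<bar> \<le> norm x * norm z" by (rule Cauchy_Schwarz_ineq2)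
  then have "(x \<bullet> z)^2 \<le> (norm x * norm z)^2"
    by (metis abs_ge_zero power2_abs power_mono)
  then have "(x \<bullet> z)^2 / (norm z)^2 \<le> (norm x)^2"
    using False by (simp add: divide_le_eq power_mult_distrib)
  then show ?thesis by (simp add: nv_sq)
qed

lemma nv_lower:
  assumes "norm z \<le> b"
  shows "(x \<bullet> z)^2 / b^2 \<le> (x \<bullet> normalize_vec z)^2"
proof (cases "z = 0")
  case True then show ?thesis by (simp add: normalize_vec_def)
next
  case False
  then have "0 < norm z" by simp
  then have "(norm z)^2 \<le> b^2" using assms by (simp add: power_mono)
  moreover have "0 < (norm z)^2" using \<open>0 < norm z\<close> by simp
  ultimately have "(x \<bullet> z)^2 / b^2 \<le> (x \<bullet> z)^2 / (norm z)^2"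
    by (intro divide_left_mono) (auto intro!: mult_pos_pos)
  then show ?thesis by (simp add: nv_sq)
qed

lemma Pmat_quad: "x \<bullet> (Pmat c l w *v x) =
   (x \<bullet> normalize_vec (c + (1 / sqrt l) *\<^sub>R w))^2 + (x \<bullet> normalize_vec (c - (1 / sqrt l) *\<^sub>R w))^2"
  by (simp add: Pmat_def matrix_vector_mult_add_rdistrib outer_mvec inner_add_right power2_eq_square inner_commute)

lemma Pmat_upper: "x \<bullet> (Pmat c l w *v x) \<le> 2 * (norm x)^2"
  unfolding Pmat_quad mult_2 by (intro add_mono nv_upper)

lemma Pmat_lower:
  assumes c: "norm c = 1" and w: "norm w = 1" and l: "l > 0"
  shows "2 * (x \<bullet> w)^2 / (sqrt l + 1)^2 \<le> x \<bullet> (Pmat c l w *v x)"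
proof -
  define s where "s = 1 / sqrt l"
  have s0: "s > 0" using l by (simp add: s_def)
  have n1: "norm (c + s *\<^sub>R w) \<le> 1 + s"
    using norm_triangle_ineq[of c "s *\<^sub>R w"] c w s0 by simp
  have n2: "norm (c - s *\<^sub>R w) \<le> 1 + s"
    using norm_triangle_ineq4[of c "s *\<^sub>R w"] c w s0 by simp
  have e1: "x \<bullet> (c + s *\<^sub>R w) = x \<bullet> c + s * (x \<bullet> w)" by (simp add: inner_add_right)
  have e2: "x \<bullet> (c - s *\<^sub>R w) = x \<bullet> c - s * (x \<bullet> w)" by (simp add: inner_diff_right)
  have "2 * (s * (x \<bullet> w))^2 / (1 + s)^2 \<le>
        ((x \<bullet> c + s * (x \<bullet> w))^2 + (x \<bullet> c - s * (x \<bullet> w))^2) / (1 + s)^2"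
    by (intro divide_right_mono) (use s0 in \<open>auto simp: power2_eq_square algebra_simps\<close>)
  also have "\<dots> = (x \<bullet> (c + s *\<^sub>R w))^2 / (1 + s)^2 + (x \<bullet> (c - s *\<^sub>R w))^2 / (1 + s)^2"
    by (simp add: e1 e2 add_divide_distrib)
  also have "\<dots> \<le> x \<bullet> (Pmat c l w *v x)"
    unfolding Pmat_quad s_def[symmetric]
    by (intro add_mono nv_lower n1 n2)
  finally have A: "2 * (s * (x \<bullet> w))^2 / (1 + s)^2 \<le> x \<bullet> (Pmat c l w *v x)" .
  have sl: "sqrt l > 0" using l by simp
  have "2 * (s * (x \<bullet> w))^2 / (1 + s)^2 = 2 * (x \<bullet> w)^2 / (sqrt l + 1)^2"
    using sl by (simp add: s_def power2_eq_square field_simps)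
  then show ?thesis using A by simp
qed

lemma split_last:
  assumes "d \<ge> (1::nat)"
  shows "(\<Sum>i=1..d. f i) = (\<Sum>i=1..d-1. f i) + (f d :: real)"
proof -
  obtain m where "d = Suc m" using assms by (cases d) auto
  then show ?thesis by (cases m) (auto simp: sum.cl_ivl_Suc)
qed

lemma spec_mvec:
  fixes V :: "real^'n^'n" and v :: "nat \<Rightarrow> real^'n"
  assumes orth: "\<forall>i\<in>{1..CARD('n)}. \<forall>j\<in>{1..CARD('n)}. v i \<bullet> v j = (if i = j then 1 else 0)"
    and eig: "\<forall>i\<in>{1..CARD('n)}. V *v v i = lam i *\<^sub>R v i"
  shows "V *v x = (\<Sum>i=1..CARD('n). (lam i * (x \<bullet> v i)) *\<^sub>R v i)"
proof -
  have "V *v x = V *v (\<Sum>i=1..CARD('n). (x \<bullet> v i) *\<^sub>R v i)"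
    using orth_expand[OF orth] by metis
  also have "\<dots> = (\<Sum>i=1..CARD('n). (lam i * (x \<bullet> v i)) *\<^sub>R v i)"
    unfolding vec.sum using eig by (intro sum.cong) (auto simp: mvec_scale)
  finally show ?thesis .
qed

lemma sum_orth_dot:
  fixes v :: "nat \<Rightarrow> real^'n"
  assumes orth: "\<forall>i\<in>{1..CARD('n)}. \<forall>j\<in>{1..CARD('n)}. v i \<bullet> v j = (if i = j then 1 else 0)"
    and j: "j \<in> {1..CARD('n)}"
  shows "(\<Sum>i=1..CARD('n). f i *\<^sub>R v i) \<bullet> v j = f j"
proof -
  have "(\<Sum>i=1..CARD('n). f i *\<^sub>R v i) \<bullet> v j = (\<Sum>i=1..CARD('n). f i * (v i \<bullet> v j))"
    by (simp add: inner_sum_left)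
  also have "\<dots> = (\<Sum>i=1..CARD('n). if i = j then f j else 0)"
    using orth j by (intro sum.cong) auto
  also have "\<dots> = f j" using j by simp
  finally show ?thesis .
qed

lemma spec_quad:
  fixes V :: "real^'n^'n" and v :: "nat \<Rightarrow> real^'n"
  assumes orth: "\<forall>i\<in>{1..CARD('n)}. \<forall>j\<in>{1..CARD('n)}. v i \<bullet> v j = (if i = j then 1 else 0)"
    and eig: "\<forall>i\<in>{1..CARD('n)}. V *v v i = lam i *\<^sub>R v i"
  shows "x \<bullet> (V *v x) = (\<Sum>i=1..CARD('n). lam i * (x \<bullet> v i)^2)"
    and "x \<bullet> x = (\<Sum>i=1..CARD('n). (x \<bullet> v i)^2)"
proof -
  show "x \<bullet> (V *v x) = (\<Sum>i=1..CARD('n). lam i * (x \<bullet> v i)^2)"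
    unfolding spec_mvec[OF orth eig] by (simp add: inner_sum_right power2_eq_square mult.assoc)
  have "x \<bullet> x = x \<bullet> (\<Sum>i=1..CARD('n). (x \<bullet> v i) *\<^sub>R v i)"
    using orth_expand[OF orth] by metis
  then show "x \<bullet> x = (\<Sum>i=1..CARD('n). (x \<bullet> v i)^2)"
    by (simp add: inner_sum_right power2_eq_square)
qed

lemma spec_eigvals:
  fixes V :: "real^'n^'n" and v :: "nat \<Rightarrow> real^'n"
  assumes orth: "\<forall>i\<in>{1..CARD('n)}. \<forall>j\<in>{1..CARD('n)}. v i \<bullet> v j = (if i = j then 1 else 0)"
    and eig: "\<forall>i\<in>{1..CARD('n)}. V *v v i = lam i *\<^sub>R v i"
  shows "eigvals V = lam ` {1..CARD('n)}"
proof
  show "lam ` {1..CARD('n)} \<subseteq> eigvals V"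
  proof
    fix m assume "m \<in> lam ` {1..CARD('n)}"
    then obtain i where i: "i \<in> {1..CARD('n)}" "m = lam i" by auto
    have "v i \<noteq> 0" using orth i by (metis inner_zero_left zero_neq_one)
    then show "m \<in> eigvals V" using eig i unfolding eigvals_def by auto
  qed
  show "eigvals V \<subseteq> lam ` {1..CARD('n)}"
  proof
    fix m assume "m \<in> eigvals V"
    then obtain y where y: "y \<noteq> 0" "V *v y = m *\<^sub>R y" unfolding eigvals_def by auto
    have "0 < y \<bullet> y" using y by simp
    then have "(\<Sum>i=1..CARD('n). (y \<bullet> v i)^2) \<noteq> 0" using spec_quad(2)[OF orth eig, of y] by simp
    then obtain j where j: "j \<in> {1..CARD('n)}" "(y \<bullet> v j)^2 \<noteq> 0"
      by (meson sum.neutral)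
    have "(V *v y) \<bullet> v j = lam j * (y \<bullet> v j)"
      unfolding spec_mvec[OF orth eig] by (rule sum_orth_dot[OF orth j(1)])
    moreover have "(V *v y) \<bullet> v j = m * (y \<bullet> v j)" using y by simp
    ultimately have "m = lam j" using j by simp
    then show "m \<in> lam ` {1..CARD('n)}" using j by auto
  qed
qed

lemma spec_minmax:
  fixes V :: "real^'n^'n" and v :: "nat \<Rightarrow> real^'n"
  assumes orth: "\<forall>i\<in>{1..CARD('n)}. \<forall>j\<in>{1..CARD('n)}. v i \<bullet> v j = (if i = j then 1 else 0)"
    and eig: "\<forall>i\<in>{1..CARD('n)}. V *v v i = lam i *\<^sub>R v i"
    and sorted: "\<forall>i\<in>{1..CARD('n)}. \<forall>j\<in>{1..CARD('n)}. i \<le> j \<longrightarrow> lam i \<le> lam j"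
  shows "lambda_min V = lam 1" "lambda_max V = lam CARD('n)"
proof -
  have d1: "1 \<le> CARD('n)" by (simp add: Suc_leI)
  show "lambda_min V = lam 1"
    unfolding lambda_min_def spec_eigvals[OF orth eig]
    by (rule Min_eqI) (use sorted d1 in auto)
  show "lambda_max V = lam CARD('n)"
    unfolding lambda_max_def spec_eigvals[OF orth eig]
    by (rule Max_eqI) (use sorted d1 in auto)
qed

lemma step_bounds:
  fixes V V' :: "real^'n^'n" and v u :: "nat \<Rightarrow> real^'n" and lam mu :: "nat \<Rightarrow> real"
  assumes orthv: "\<forall>i\<in>{1..CARD('n)}. \<forall>j\<in>{1..CARD('n)}. v i \<bullet> v j = (if i = j then 1 else 0)"
    and eigv: "\<forall>i\<in>{1..CARD('n)}. V *v v i = lam i *\<^sub>R v i"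
    and sortedv: "\<forall>i\<in>{1..CARD('n)}. \<forall>j\<in>{1..CARD('n)}. i \<le> j \<longrightarrow> lam i \<le> lam j"
    and orthu: "\<forall>i\<in>{1..CARD('n)}. \<forall>j\<in>{1..CARD('n)}. u i \<bullet> u j = (if i = j then 1 else 0)"
    and eigu: "\<forall>i\<in>{1..CARD('n)}. V' *v u i = mu i *\<^sub>R u i"
    and V': "V' = V + om *\<^sub>R (\<Sum>i=1..CARD('n) - 1. Pmat c (lam 1) (v i))"
    and c: "norm c = 1" and om: "om \<ge> 0" and l1: "lam 1 > 0"
  shows "mu CARD('n) \<le> lam CARD('n) + om * (2 * (real CARD('n) - 1))"
    and "\<exists>\<beta>. 0 \<le> \<beta> \<and> \<beta> \<le> 1 \<and>
           lam 1 * (1 - \<beta>) + lam CARD('n) * \<beta> + 2 * om / (sqrt (lam 1) + 1)^2 * (1 - \<beta>) \<le> mu 1"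
proof -
  define d where "d = CARD('n)"
  have d1: "1 \<le> d" by (simp add: d_def Suc_leI)
  define S where "S = (\<Sum>i=1..d - 1. Pmat c (lam 1) (v i))"
  have quad: "mu j = x \<bullet> (V *v x) + om * (\<Sum>i=1..d - 1. x \<bullet> (Pmat c (lam 1) (v i) *v x))"
    if j: "j \<in> {1..d}" and x: "x = u j" for j x
  proof -
    have xx: "x \<bullet> x = 1" using orthu j x d_def by auto
    have "x \<bullet> (V' *v x) = mu j" using eigu j x xx d_def by auto
    moreover have "V' *v x = V *v x + om *\<^sub>R (\<Sum>i=1..d - 1. Pmat c (lam 1) (v i) *v x)"
      unfolding V' d_def matrix_vector_mult_add_rdistrib scaleR_matrix_vector_assoc[symmetric] sum_mvec ..
    ultimately show ?thesis by (simp add: inner_add_right inner_sum_right)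
  qed
  have nv: "norm (v i) = 1" if "i \<in> {1..d}" for i
    using orthv that d_def by (simp add: norm_eq_sqrt_inner)
  have nu: "(norm (u i))^2 = 1" if "i \<in> {1..d}" for i
    using orthu that d_def by (simp add: power2_norm_eq_inner)
  have d1r: "real (d - 1) = real d - 1" using d1 by (simp add: of_nat_diff)
  {
    define x where "x = u d"
    have "x \<bullet> (V *v x) = (\<Sum>i=1..d. lam i * (x \<bullet> v i)^2)"
      using spec_quad(1)[OF orthv eigv] d_def by simp
    also have "\<dots> \<le> (\<Sum>i=1..d. lam d * (x \<bullet> v i)^2)"
      using sortedv d_def by (intro sum_mono mult_right_mono) auto
    also have "\<dots> = lam d * (x \<bullet> x)"
      using spec_quad(2)[OF orthv eigv, of x] d_def by (simp add: sum_distrib_left)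
    also have "\<dots> = lam d" using nu[of d] d1 by (simp add: x_def power2_norm_eq_inner)
    finally have A: "x \<bullet> (V *v x) \<le> lam d" .
    have "(\<Sum>i=1..d - 1. x \<bullet> (Pmat c (lam 1) (v i) *v x)) \<le> (\<Sum>i=1..d - 1. 2 * (norm x)^2)"
      by (intro sum_mono Pmat_upper)
    also have "\<dots> = 2 * (real d - 1)" using nu[of d] d1 d1r by (simp add: x_def)
    finally have B: "(\<Sum>i=1..d - 1. x \<bullet> (Pmat c (lam 1) (v i) *v x)) \<le> 2 * (real d - 1)" .
    have Q: "mu d = x \<bullet> (V *v x) + om * (\<Sum>i=1..d - 1. x \<bullet> (Pmat c (lam 1) (v i) *v x))"
      using quad[of d x] d1 x_def by simp
    have "om * (\<Sum>i=1..d - 1. x \<bullet> (Pmat c (lam 1) (v i) *v x)) \<le> om * (2 * (real d - 1))"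
      using B om by (rule mult_left_mono)
    then have "mu d \<le> lam d + om * (2 * (real d - 1))"
      using Q A by linarith
  }
  then show "mu CARD('n) \<le> lam CARD('n) + om * (2 * (real CARD('n) - 1))" by (simp add: d_def)
  define x where "x = u 1"
  define \<beta> where "\<beta> = (x \<bullet> v d)^2"
  have xx: "(\<Sum>i=1..d. (x \<bullet> v i)^2) = 1"
    using spec_quad(2)[OF orthv eigv, of x] nu[of 1] d1 d_def by (simp add: x_def power2_norm_eq_inner)
  then have rest: "(\<Sum>i=1..d-1. (x \<bullet> v i)^2) = 1 - \<beta>"
    using split_last[OF d1, of "\<lambda>i. (x \<bullet> v i)^2"] by (simp add: \<beta>_def)
  have b0: "0 \<le> \<beta>" by (simp add: \<beta>_def)
  have b1: "\<beta> \<le> 1" using rest sum_nonneg[of "{1..d-1}" "\<lambda>i. (x \<bullet> v i)^2"] by simp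
  have "x \<bullet> (V *v x) = (\<Sum>i=1..d. lam i * (x \<bullet> v i)^2)"
    using spec_quad(1)[OF orthv eigv] d_def by simp
  also have "\<dots> = (\<Sum>i=1..d-1. lam i * (x \<bullet> v i)^2) + lam d * \<beta>"
    using split_last[OF d1] by (simp add: \<beta>_def)
  finally have "x \<bullet> (V *v x) = (\<Sum>i=1..d-1. lam i * (x \<bullet> v i)^2) + lam d * \<beta>" .
  moreover have "(\<Sum>i=1..d-1. lam 1 * (x \<bullet> v i)^2) \<le> (\<Sum>i=1..d-1. lam i * (x \<bullet> v i)^2)"
    using sortedv d_def by (intro sum_mono mult_right_mono) auto
  ultimately have A: "lam 1 * (1 - \<beta>) + lam d * \<beta> \<le> x \<bullet> (V *v x)"
    using rest by (simp add: sum_distrib_left[symmetric])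
  have "(\<Sum>i=1..d-1. 2 * (x \<bullet> v i)^2 / (sqrt (lam 1) + 1)^2) \<le> (\<Sum>i=1..d - 1. x \<bullet> (Pmat c (lam 1) (v i) *v x))"
    using nv c l1 by (intro sum_mono Pmat_lower) auto
  moreover have "(\<Sum>i=1..d-1. 2 * (x \<bullet> v i)^2 / (sqrt (lam 1) + 1)^2) = 2 / (sqrt (lam 1) + 1)^2 * (1 - \<beta>)"
    using rest by (simp add: sum_distrib_left[symmetric] sum_divide_distrib[symmetric])
  ultimately have B: "2 / (sqrt (lam 1) + 1)^2 * (1 - \<beta>) \<le> (\<Sum>i=1..d - 1. x \<bullet> (Pmat c (lam 1) (v i) *v x))"
    by simp
  have Q: "mu 1 = x \<bullet> (V *v x) + om * (\<Sum>i=1..d - 1. x \<bullet> (Pmat c (lam 1) (v i) *v x))"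
    using quad[of 1 x] d1 x_def by simp
  have "om * (2 / (sqrt (lam 1) + 1)^2 * (1 - \<beta>)) \<le> om * (\<Sum>i=1..d - 1. x \<bullet> (Pmat c (lam 1) (v i) *v x))"
    using B om by (rule mult_left_mono)
  then have "lam 1 * (1 - \<beta>) + lam d * \<beta> + om * (2 / (sqrt (lam 1) + 1)^2 * (1 - \<beta>)) \<le> mu 1"
    using Q A by linarith
  then show "\<exists>\<beta>. 0 \<le> \<beta> \<and> \<beta> \<le> 1 \<and>
           lam 1 * (1 - \<beta>) + lam CARD('n) * \<beta> + 2 * om / (sqrt (lam 1) + 1)^2 * (1 - \<beta>) \<le> mu 1"
  proof (intro exI[of _ \<beta>] conjI b0 b1)
    have "2 * om / (sqrt (lam 1) + 1)^2 * (1 - \<beta>) = om * (2 / (sqrt (lam 1) + 1)^2 * (1 - \<beta>))"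
      by simp
    then show "lam 1 * (1 - \<beta>) + lam CARD('n) * \<beta> + 2 * om / (sqrt (lam 1) + 1)^2 * (1 - \<beta>) \<le> mu 1"
      using \<open>lam 1 * (1 - \<beta>) + lam d * \<beta> + om * (2 / (sqrt (lam 1) + 1)^2 * (1 - \<beta>)) \<le> mu 1\<close>
      unfolding d_def by linarith
  qed
qed

lemma sq_bound: "l \<ge> 2 \<Longrightarrow> (sqrt l + 1)^2 \<le> 3 * l"
proof -
  assume l: "l \<ge> 2"
  define u where "u = sqrt l"
  have u0: "u \<ge> 0" using l by (simp add: u_def)
  have uu: "u^2 = l" using l by (simp add: u_def)
  have "u \<ge> 1.4"
  proof (rule ccontr)
    assume "\<not> u \<ge> 1.4"
    then have "u^2 < 1.4^2" using u0 by (intro power_strict_mono) auto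
    then show False using uu l by (simp add: power2_eq_square)
  qed
  then have "u * (u - 1) \<ge> 1.4 * 0.4" by (intro mult_mono) auto
  then have "2 * u + 1 \<le> 2 * u^2" by (simp add: power2_eq_square algebra_simps)
  then show ?thesis using uu by (simp add: u_def[symmetric] power2_eq_square algebra_simps)
qed

lemma real_step:
  fixes D k l0 C l L om \<beta> l' L' :: real
  assumes D: "D \<ge> 2" and k: "k = 2 / (3 * (D - 1))" and l02: "l0 \<ge> 2"
    and l0C: "l0 \<ge> sqrt k * (2 * D * C) + k" and C: "C > 0"
    and ll0: "l \<ge> l0" and Ll: "L \<ge> l" and inv: "k * L \<le> l^2"
    and om0: "0 \<le> om" and omC: "om \<le> C * sqrt L" and b0: "0 \<le> \<beta>" and b1: "\<beta> \<le> 1"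
    and low: "l * (1 - \<beta>) + L * \<beta> + 2 * om / (sqrt l + 1)^2 * (1 - \<beta>) \<le> l'"
    and up: "L' \<le> L + om * (2 * (D - 1))"
  shows "l0 \<le> l' \<and> k * L' \<le> l'^2"
proof -
  define g where "g = 2 * om / (sqrt l + 1)^2"
  have g0: "g \<ge> 0" using om0 by (simp add: g_def)
  have kD: "k * (2 * (D - 1)) = 4 / 3" using D by (simp add: k field_simps)
  have k0: "k > 0" using D by (simp add: k)
  have k1: "k \<le> 1" using D by (simp add: k)
  have low': "(l + g) * (1 - \<beta>) + L * \<beta> \<le> l'" using low by (simp add: g_def algebra_simps)
  show ?thesis
  proof (cases "l + g \<le> L")
    case True
    have "(l + g) * (1 - \<beta>) + (l + g) * \<beta> \<le> (l + g) * (1 - \<beta>) + L * \<beta>"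
      using True b0 by (intro add_left_mono mult_right_mono) auto
    then have lg: "l + g \<le> l'" using low' by (simp add: algebra_simps)
    have l0': "l0 \<le> l'" using lg g0 ll0 by linarith
    have lpos: "l \<ge> 2" using ll0 l02 by linarith
    have sq: "(sqrt l + 1)^2 \<le> 3 * l" by (rule sq_bound[OF lpos])
    have s1: "sqrt l + 1 > 0" using lpos real_sqrt_ge_zero[of l] by linarith
    then have sqp: "(sqrt l + 1)^2 > 0" by (rule zero_less_power)
    have "4 / 3 * om \<le> 2 * l * g"
    proof -
      have "om * (sqrt l + 1)^2 \<le> om * (3 * l)" using sq om0 by (rule mult_left_mono)
      then have "4 / 3 * om * (sqrt l + 1)^2 \<le> 4 * l * om" by (simp add: algebra_simps)
      then have "4 / 3 * om \<le> 4 * l * om / (sqrt l + 1)^2" using sqp by (simp add: le_divide_eq)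
      then show ?thesis by (simp add: g_def)
    qed
    moreover have "l^2 + 2 * l * g \<le> (l + g)^2" using g0 by (simp add: power2_eq_square algebra_simps)
    moreover have "(l + g)^2 \<le> l'^2" using lg g0 lpos by (intro power_mono) auto
    moreover have "k * L' \<le> k * L + om * (k * (2 * (D - 1)))"
    proof -
      have "k * L' \<le> k * (L + om * (2 * (D - 1)))" using up k0 by (intro mult_left_mono) auto
      then show ?thesis by (simp add: algebra_simps)
    qed
    moreover have "om * (k * (2 * (D - 1))) = 4 / 3 * om" unfolding kD by simp
    ultimately have "k * L' \<le> l'^2" using inv by linarith
    then show ?thesis using l0' by simp
  next
    case False
    have "L * (1 - \<beta>) + L * \<beta> \<le> (l + g) * (1 - \<beta>) + L * \<beta>"
      using False b1 by (intro add_right_mono mult_right_mono) auto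
    then have Ll': "L \<le> l'" using low' by (simp add: algebra_simps)
    have L2: "L \<ge> 2" using ll0 l02 Ll by linarith
    have l0': "l0 \<le> l'" using Ll' ll0 Ll by linarith
    define r where "r = sqrt L"
    define q where "q = sqrt k"
    have r1: "r \<ge> 1" using L2 by (simp add: r_def)
    have rr: "r^2 = L" using L2 by (simp add: r_def)
    have q0: "q \<ge> 0" and q1: "q \<le> 1" using k0 k1 by (auto simp: q_def)
    have qq: "q^2 = k" using k0 by (simp add: q_def)
    have "q * (D - 1) \<le> 1 * (D - 1)" using q1 D by (intro mult_right_mono) auto
    also have "\<dots> \<le> r * D"
    proof -
      have "1 * D \<le> r * D" using r1 D by (intro mult_right_mono) auto
      then show ?thesis by simp
    qed
    finally have rq: "q * (D - 1) \<le> r * D" by simp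
    have "L - k \<ge> q * (2 * D * C)" using l0C ll0 Ll by (simp add: q_def)
    then have "L * (L - k) \<ge> L * (q * (2 * D * C))" using L2 by (intro mult_left_mono) auto
    moreover have "L * (q * (2 * D * C)) = (r * q) * (C * r) * (2 * D)" using rr
      by (simp add: power2_eq_square algebra_simps)
    moreover have "(r * q) * (C * r) * (2 * D) \<ge> q * (C * r) * (2 * q * (D - 1))"
    proof -
      have "q * (2 * q * (D - 1)) \<le> q * (2 * (r * D))" using rq q0 by (intro mult_left_mono) auto
      then have "q * (2 * q * (D - 1)) * (C * r) \<le> q * (2 * (r * D)) * (C * r)"
        using C r1 by (intro mult_right_mono) auto
      then show ?thesis by (simp add: algebra_simps)
    qed
    moreover have "q * (C * r) * (2 * q * (D - 1)) = (C * r) * (k * (2 * (D - 1)))"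
      using qq by (simp add: power2_eq_square algebra_simps flip: qq)
    moreover have "om * (k * (2 * (D - 1))) \<le> (C * r) * (k * (2 * (D - 1)))"
      unfolding kD using omC by (simp add: r_def)
    moreover have "k * L' \<le> k * L + om * (k * (2 * (D - 1)))"
    proof -
      have "k * L' \<le> k * (L + om * (2 * (D - 1)))" using up k0 by (intro mult_left_mono) auto
      then show ?thesis by (simp add: algebra_simps)
    qed
    moreover have "L^2 \<le> l'^2" using Ll' L2 by (intro power_mono) auto
    moreover have "L * (L - k) = L^2 - k * L" by (simp add: power2_eq_square algebra_simps)
    ultimately have "k * L' \<le> l'^2" by linarith
    then show ?thesis using l0' by simp
  qed
qed

theorem mainTheorem3:
  fixes c :: "nat \<Rightarrow> real^'n"
    and w :: "real^'n^'n \<Rightarrow> real"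
    and C lam0v :: real
    and V :: "nat \<Rightarrow> real^'n^'n"
    and lam :: "nat \<Rightarrow> nat \<Rightarrow> real"
    and v :: "nat \<Rightarrow> nat \<Rightarrow> real^'n"
  assumes d2: "CARD('n) \<ge> 2"
    and unit: "\<forall>t. norm (c t) = 1"
    and Cpos: "C > 0"
    and omega: "\<forall>X. psd X \<longrightarrow> 0 \<le> w X \<and> w X \<le> C * sqrt (lambda_max X)"
    and lam0: "lam0v \<ge> max 2 (sqrt (2 / (3 * (real CARD('n) - 1))) * (2 * real CARD('n) * C)
                               + 2 / (3 * (real CARD('n) - 1)))"
    and V0: "V 0 = lam0v *\<^sub>R mat 1"
    and eig: "\<forall>t. \<forall>i\<in>{1..CARD('n)}. V t *v v t i = lam t i *\<^sub>R v t i"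
    and orth: "\<forall>t. \<forall>i\<in>{1..CARD('n)}. \<forall>j\<in>{1..CARD('n)}.
                  v t i \<bullet> v t j = (if i = j then 1 else 0)"
    and sorted: "\<forall>t. \<forall>i\<in>{1..CARD('n)}. \<forall>j\<in>{1..CARD('n)}. i \<le> j \<longrightarrow> lam t i \<le> lam t j"
    and step: "\<forall>t. V (Suc t) = V t + w (V t) *\<^sub>R (\<Sum>i=1..CARD('n) - 1. Pmat (c t) (lam t 1) (v t i))"
  shows "\<forall>t. lambda_min (V t) \<ge> sqrt (2 / (3 * (real CARD('n) - 1)) * lambda_max (V t))"
proof -
  define d where "d = CARD('n)"
  define k where "k = 2 / (3 * (real CARD('n) - 1))"
  have d1: "1 \<le> d" by (simp add: d_def Suc_leI)
  have mm: "lambda_min (V t) = lam t 1 \<and> lambda_max (V t) = lam t d" for t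
    using spec_minmax[of "v t" "V t" "lam t"] eig orth sorted by (simp add: d_def)
  have sym: "transpose (V t) = V t" for t
  proof (induction t)
    case 0 then show ?case by (simp add: V0 transpose_scalar transpose_mat)
  next
    case (Suc t)
    then show ?case
      by (simp add: step transpose_add transpose_scalar transpose_sum Pmat_def transpose_outer)
  qed
  have l02: "lam0v \<ge> 2" and l0C: "lam0v \<ge> sqrt k * (2 * real CARD('n) * C) + k"
    using lam0 by (auto simp: k_def)
  have D2: "real CARD('n) \<ge> 2" using d2 by simp
  have k1: "k \<le> 1" using D2 by (simp add: k_def)
  have inv: "lam0v \<le> lam t 1 \<and> k * lam t d \<le> (lam t 1)^2" for t
  proof (induction t)
    case 0
    have "lam 0 i = lam0v" if "i \<in> {1..d}" for i
    proof -
      have "v 0 i \<noteq> 0" using orth that d_def by (metis inner_zero_left zero_neq_one)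
      moreover have "lam 0 i *\<^sub>R v 0 i = lam0v *\<^sub>R v 0 i"
        using eig that d_def by (metis V0 scaleR_matrix_vector_assoc matrix_vector_mul_lid)
      ultimately show ?thesis by simp
    qed
    then have a: "lam 0 1 = lam0v" "lam 0 d = lam0v" using d1 by auto
    have "k * lam0v \<le> 1 * lam0v" using k1 l02 by (intro mult_right_mono) auto
    also have "\<dots> \<le> lam0v * lam0v" using l02 by (intro mult_right_mono) auto
    finally show ?case using a by (simp add: power2_eq_square)
  next
    case (Suc t)
    have lpos: "lam t 1 > 0" using Suc l02 by linarith
    have Ll: "lam t 1 \<le> lam t d" using sorted d1 d_def by auto
    have psd: "psd (V t)"
      unfolding psd_def
    proof (intro conjI allI)
      show "transpose (V t) = V t" by (rule sym)
      fix x
      have "x \<bullet> (V t *v x) = (\<Sum>i=1..CARD('n). lam t i * (x \<bullet> v t i)^2)"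
        using spec_quad(1)[of "v t" "V t" "lam t"] eig orth by simp
      also have "\<dots> \<ge> 0"
      proof (intro sum_nonneg mult_nonneg_nonneg)
        fix i assume "i \<in> {1..CARD('n)}"
        then have "lam t 1 \<le> lam t i" using sorted d1 d_def by auto
        then show "0 \<le> lam t i" using lpos by linarith
      qed simp
      finally show "0 \<le> x \<bullet> (V t *v x)" .
    qed
    have om: "0 \<le> w (V t)" "w (V t) \<le> C * sqrt (lam t d)"
      using omega psd mm[of t] by auto
    have sb: "lam (Suc t) CARD('n) \<le> lam t CARD('n) + w (V t) * (2 * (real CARD('n) - 1))"
      "\<exists>\<beta>. 0 \<le> \<beta> \<and> \<beta> \<le> 1 \<and>
           lam t 1 * (1 - \<beta>) + lam t CARD('n) * \<beta> + 2 * w (V t) / (sqrt (lam t 1) + 1)^2 * (1 - \<beta>) \<le> lam (Suc t) 1"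
      using step_bounds[OF spec[OF orth, of t] spec[OF eig, of t] spec[OF sorted, of t]
          spec[OF orth, of "Suc t"] spec[OF eig, of "Suc t"] spec[OF step, of t] spec[OF unit, of t] om(1) lpos]
      by auto
    then obtain \<beta> where b: "0 \<le> \<beta>" "\<beta> \<le> 1"
      "lam t 1 * (1 - \<beta>) + lam t CARD('n) * \<beta> + 2 * w (V t) / (sqrt (lam t 1) + 1)^2 * (1 - \<beta>) \<le> lam (Suc t) 1"
      by blast
    show ?case
      using real_step[OF D2 k_def l02 l0C Cpos _ _ _ om(1) _ b(1) b(2) b(3) sb(1)] Suc Ll om(2)
      by (simp add: d_def)
  qed
  show ?thesis
  proof
    fix t
    have "sqrt (k * lam t d) \<le> sqrt ((lam t 1)^2)" using inv[of t] by (rule_tac real_sqrt_le_mono) simp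
    also have "\<dots> = lam t 1" using inv[of t] l02 by simp
    finally show "sqrt (2 / (3 * (real CARD('n) - 1)) * lambda_max (V t)) \<le> lambda_min (V t)"
      using mm[of t] by (simp add: k_def)
  qed
qed

end
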